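(* Let $G=(V,\mathcal E)$ be an undirected loopless graph and $(V_j)_{j\in J}$ a partition of $V$ into non-empty sets. Then $(V_j)_{j\in J}$ is a monomorphic decomposition of $G$ if and only if each induced subgraph $G_{\restriction V_j}$ is a clique or an independent set and $G$ is the lexicographic sum of the graphs $G_{\restriction V_j}$ indexed by some graph $H$ on $J$. In particular, $G$ has a monomorphic decomposition into finitely many classes if and only if $G$ is a lexicographic sum of cliques or independent sets indexed by a finite graph.
   Context: A monomorphic decomposition of a graph $G$ with vertex set $V$ is a partition $(V_j)_{j\in J}$ of $V$ into non-empty sets such that for all finite $F,F'\subseteq V$ with $|F\cap V_j|=|F'\cap V_j|$ for every $j\in J$, the induced subgraphs $G_{\restriction F}$ and $G_{\restriction F'}$ are isomorphic. If $H$ is a graph on a vertex set $J$ and $(L_j)_{j\in J}$ are graphs, the lexicographic sum of the $L_j$ indexed by $H$ is the graph on the disjoint union of the vertex sets of the $L_j$ in which two vertices of the same $L_j$ are adjacent iff they are adjacent in $L_j$, and $x\in L_i$, $y\in L_j$ with $i\neq j$ are adjacent iff $\{i,j\}$ is an edge of $H$. *)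

theory Defs
  imports Main
begin

text \<open>An undirected loopless graph on vertex set V, given by an edge relation E
  (only its restriction to V matters).\<close>
definition ugraph :: "'a set \<Rightarrow> ('a \<Rightarrow> 'a \<Rightarrow> bool) \<Rightarrow> bool" where
  "ugraph V E \<longleftrightarrow> (\<forall>x\<in>V. \<forall>y\<in>V. E x y \<longleftrightarrow> E y x) \<and> (\<forall>x\<in>V. \<not> E x x)"

definition is_partition :: "'a set \<Rightarrow> 'j set \<Rightarrow> ('j \<Rightarrow> 'a set) \<Rightarrow> bool" where
  "is_partition V J P \<longleftrightarrow>
     (\<forall>j\<in>J. P j \<noteq> {}) \<and>
     (\<forall>i\<in>J. \<forall>j\<in>J. i \<noteq> j \<longrightarrow> P i \<inter> P j = {}) \<and>
     (\<Union>j\<in>J. P j) = V"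

definition induced_iso :: "('a \<Rightarrow> 'a \<Rightarrow> bool) \<Rightarrow> 'a set \<Rightarrow> 'a set \<Rightarrow> bool" where
  "induced_iso E F F' \<longleftrightarrow>
     (\<exists>f. bij_betw f F F' \<and> (\<forall>x\<in>F. \<forall>y\<in>F. E x y \<longleftrightarrow> E (f x) (f y)))"

definition monomorphic_decomposition ::
  "'a set \<Rightarrow> ('a \<Rightarrow> 'a \<Rightarrow> bool) \<Rightarrow> 'j set \<Rightarrow> ('j \<Rightarrow> 'a set) \<Rightarrow> bool" where
  "monomorphic_decomposition V E J P \<longleftrightarrow>
     is_partition V J P \<and>
     (\<forall>F F'. finite F \<and> finite F' \<and> F \<subseteq> V \<and> F' \<subseteq> V \<and>
        (\<forall>j\<in>J. card (F \<inter> P j) = card (F' \<inter> P j)) \<longrightarrow> induced_iso E F F')"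

definition clique_or_independent :: "('a \<Rightarrow> 'a \<Rightarrow> bool) \<Rightarrow> 'a set \<Rightarrow> bool" where
  "clique_or_independent E A \<longleftrightarrow>
     (\<forall>x\<in>A. \<forall>y\<in>A. x \<noteq> y \<longrightarrow> E x y) \<or> (\<forall>x\<in>A. \<forall>y\<in>A. \<not> E x y)"

text \<open>G = (V,E) is the lexicographic sum of the induced subgraphs G|P j indexed by
  the graph H on J (the partition being (P j)_{j\<in>J}): vertices in the same part are
  adjacent as in G (automatic), vertices in distinct parts i, j are adjacent iff
  {i,j} is an edge of H.\<close>
definition is_lex_sum ::
  "'a set \<Rightarrow> ('a \<Rightarrow> 'a \<Rightarrow> bool) \<Rightarrow> 'j set \<Rightarrow> ('j \<Rightarrow> 'a set) \<Rightarrow> ('j \<Rightarrow> 'j \<Rightarrow> bool) \<Rightarrow> bool" where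
  "is_lex_sum V E J P H \<longleftrightarrow>
     ugraph J H \<and>
     (\<forall>i\<in>J. \<forall>j\<in>J. i \<noteq> j \<longrightarrow> (\<forall>x\<in>P i. \<forall>y\<in>P j. E x y \<longleftrightarrow> H i j))"

end

theory Submission
  imports Defs
begin

lemma two_iso:
  assumes sym: "\<forall>x\<in>V. \<forall>y\<in>V. E x y \<longleftrightarrow> E y x"
    and iso: "induced_iso E {a,b} {c,d}" and "a \<noteq> b" "c \<noteq> d" "E a b"
    and "c \<in> V" "d \<in> V"
  shows "E c d"
proof -
  from iso obtain f where bf: "bij_betw f {a,b} {c,d}"
    and pr: "\<forall>x\<in>{a,b}. \<forall>y\<in>{a,b}. E x y \<longleftrightarrow> E (f x) (f y)"
    unfolding induced_iso_def by blast
  have "E (f a) (f b)" using pr assms by auto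
  moreover have "f a \<in> {c,d}" "f b \<in> {c,d}" "f a \<noteq> f b"
    using bij_betw_apply[OF bf] inj_on_contraD[OF bij_betw_imp_inj_on[OF bf] \<open>a \<noteq> b\<close>] by auto
  ultimately have "(f a = c \<and> f b = d) \<or> (f a = d \<and> f b = c)" by auto
  then show ?thesis
  proof
    assume "f a = c \<and> f b = d" then show ?thesis using \<open>E (f a) (f b)\<close> by simp
  next
    assume "f a = d \<and> f b = c" then have "E d c" using \<open>E (f a) (f b)\<close> by simp
    then show ?thesis using sym assms by blast
  qed
qed

lemma main_gen:
  assumes ug: "ugraph V E" and part: "is_partition V J P"
  shows "monomorphic_decomposition V E J P \<longleftrightarrow>
              (\<forall>j\<in>J. clique_or_independent E (P j)) \<and> (\<exists>H. is_lex_sum V E J P H)"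
proof -
  have sym: "\<forall>x\<in>V. \<forall>y\<in>V. E x y \<longleftrightarrow> E y x" and irr: "\<forall>x\<in>V. \<not> E x x"
    using ug unfolding ugraph_def by auto
  have ne: "\<forall>j\<in>J. P j \<noteq> {}" and dis: "\<forall>i\<in>J. \<forall>j\<in>J. i \<noteq> j \<longrightarrow> P i \<inter> P j = {}"
    and un: "(\<Union>j\<in>J. P j) = V"
    using part unfolding is_partition_def by auto
  have sub: "\<And>j. j \<in> J \<Longrightarrow> P j \<subseteq> V" using un by auto
  show ?thesis
  proof
    assume md: "monomorphic_decomposition V E J P"
    then have M: "\<And>F F'. finite F \<Longrightarrow> finite F' \<Longrightarrow> F \<subseteq> V \<Longrightarrow> F' \<subseteq> V \<Longrightarrow>
        (\<forall>j\<in>J. card (F \<inter> P j) = card (F' \<inter> P j)) \<Longrightarrow> induced_iso E F F'"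
      unfolding monomorphic_decomposition_def by blast
    have C: "clique_or_independent E (P j)" if j: "j \<in> J" for j
    proof (rule ccontr)
      assume "\<not> clique_or_independent E (P j)"
      then obtain a b c d where ab: "a \<in> P j" "b \<in> P j" "a \<noteq> b" "\<not> E a b"
        and cd: "c \<in> P j" "d \<in> P j" "E c d"
        unfolding clique_or_independent_def by blast
      have "c \<noteq> d" using cd irr sub[OF j] by auto
      have "\<forall>k\<in>J. card ({c,d} \<inter> P k) = card ({a,b} \<inter> P k)"
      proof
        fix k assume k: "k \<in> J"
        show "card ({c,d} \<inter> P k) = card ({a,b} \<inter> P k)"
        proof (cases "k = j")
          case True then show ?thesis using ab cd \<open>c \<noteq> d\<close> by auto
        next
          case False
          then have "P j \<inter> P k = {}" using dis j k by auto
          then have "{c,d} \<inter> P k = {}" "{a,b} \<inter> P k = {}" using ab cd by auto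
          then show ?thesis by simp
        qed
      qed
      then have "induced_iso E {c,d} {a,b}"
        using M[of "{c,d}" "{a,b}"] ab cd sub[OF j] by auto
      then have "E a b" using two_iso[OF sym _ \<open>c \<noteq> d\<close> \<open>a \<noteq> b\<close> \<open>E c d\<close>] ab sub[OF j] by auto
      then show False using ab by simp
    qed
    define H where "H = (\<lambda>i j. i \<noteq> j \<and> (\<exists>x\<in>P i. \<exists>y\<in>P j. E x y))"
    have "is_lex_sum V E J P H"
      unfolding is_lex_sum_def ugraph_def
    proof (intro conjI ballI impI)
      fix i j assume i: "i \<in> J" and j: "j \<in> J"
      have sw: "E y x" if "x \<in> V" "y \<in> V" "E x y" for x y using sym that by blast
      show "H i j = H j i" unfolding H_def
      proof
        assume "i \<noteq> j \<and> (\<exists>x\<in>P i. \<exists>y\<in>P j. E x y)"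
        then obtain x y where "i \<noteq> j" "x \<in> P i" "y \<in> P j" "E x y" by blast
        moreover then have "E y x" using sw sub[OF i] sub[OF j] by blast
        ultimately show "j \<noteq> i \<and> (\<exists>x\<in>P j. \<exists>y\<in>P i. E x y)" by blast
      next
        assume "j \<noteq> i \<and> (\<exists>x\<in>P j. \<exists>y\<in>P i. E x y)"
        then obtain x y where "i \<noteq> j" "x \<in> P j" "y \<in> P i" "E x y" by blast
        moreover then have "E y x" using sw sub[OF i] sub[OF j] by blast
        ultimately show "i \<noteq> j \<and> (\<exists>x\<in>P i. \<exists>y\<in>P j. E x y)" by blast
      qed
    next
      fix i assume "i \<in> J" then show "\<not> H i i" unfolding H_def by simp
    next
      fix i j x y assume i: "i \<in> J" and j: "j \<in> J" and ij: "i \<noteq> j"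
        and x: "x \<in> P i" and y: "y \<in> P j"
      have xy: "x \<noteq> y" using dis i j ij x y by auto
      show "E x y = H i j"
      proof
        assume "E x y" then show "H i j" unfolding H_def using ij x y by blast
      next
        assume "H i j"
        then obtain x0 y0 where x0: "x0 \<in> P i" and y0: "y0 \<in> P j" and e: "E x0 y0"
          unfolding H_def by blast
        have xy0: "x0 \<noteq> y0" using dis i j ij x0 y0 by auto
        have "\<forall>k\<in>J. card ({x0,y0} \<inter> P k) = card ({x,y} \<inter> P k)"
        proof
          fix k assume k: "k \<in> J"
          show "card ({x0,y0} \<inter> P k) = card ({x,y} \<inter> P k)"
          proof (cases "k = i")
            case True
            then have "y0 \<notin> P k" "y \<notin> P k" using dis i j ij y0 y by auto
            then have "{x0,y0} \<inter> P k = {x0}" "{x,y} \<inter> P k = {x}" using True x0 x by auto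
            then show ?thesis by simp
          next
            case F1: False
            show ?thesis
            proof (cases "k = j")
              case True
              then have "x0 \<notin> P k" "x \<notin> P k" using dis i j ij x0 x by auto
              then have "{x0,y0} \<inter> P k = {y0}" "{x,y} \<inter> P k = {y}" using True y0 y by auto
              then show ?thesis by simp
            next
              case False
              have "P i \<inter> P k = {}" using dis i k F1 by auto
              moreover have "P j \<inter> P k = {}" using dis j k False by auto
              ultimately have "x0 \<notin> P k" "x \<notin> P k" "y0 \<notin> P k" "y \<notin> P k"
                using x0 x y0 y by auto
              then have "{x0,y0} \<inter> P k = {}" "{x,y} \<inter> P k = {}" by auto
              then show ?thesis by simp
            qed
          qed
        qed
        then have "induced_iso E {x0,y0} {x,y}"
          using M[of "{x0,y0}" "{x,y}"] x0 y0 x y sub[OF i] sub[OF j] by auto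
        then show "E x y" using two_iso[OF sym _ xy0 xy e] x y sub[OF i] sub[OF j] by auto
      qed
    qed
    then show "(\<forall>j\<in>J. clique_or_independent E (P j)) \<and> (\<exists>H. is_lex_sum V E J P H)"
      using C by blast
  next
    assume R: "(\<forall>j\<in>J. clique_or_independent E (P j)) \<and> (\<exists>H. is_lex_sum V E J P H)"
    then obtain H where C: "\<forall>j\<in>J. clique_or_independent E (P j)"
      and L: "\<forall>i\<in>J. \<forall>j\<in>J. i \<noteq> j \<longrightarrow> (\<forall>x\<in>P i. \<forall>y\<in>P j. E x y \<longleftrightarrow> H i j)"
      unfolding is_lex_sum_def by blast
    define idx where "idx x = (SOME j. j \<in> J \<and> x \<in> P j)" for x
    have idx1: "idx x \<in> J \<and> x \<in> P (idx x)" if "x \<in> V" for x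
    proof -
      have "\<exists>j. j \<in> J \<and> x \<in> P j" using un that by auto
      then show ?thesis unfolding idx_def by (rule someI_ex)
    qed
    have idx2: "idx x = j" if "j \<in> J" "x \<in> P j" for x j
    proof -
      have "x \<in> V" using sub that by auto
      from idx1[OF this] show ?thesis using dis that by blast
    qed
    have "induced_iso E F F'" if fin: "finite F" "finite F'" "F \<subseteq> V" "F' \<subseteq> V"
      and cc: "\<forall>j\<in>J. card (F \<inter> P j) = card (F' \<inter> P j)" for F F'
    proof -
      have "\<forall>j\<in>J. \<exists>g. bij_betw g (F \<inter> P j) (F' \<inter> P j)"
        using cc fin by (auto intro: finite_same_card_bij)
      then obtain g where g: "\<And>j. j \<in> J \<Longrightarrow> bij_betw (g j) (F \<inter> P j) (F' \<inter> P j)"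
        by metis
      define f where "f x = g (idx x) x" for x
      have fP: "f x \<in> F' \<inter> P (idx x)" if "x \<in> F" for x
      proof -
        have "idx x \<in> J" "x \<in> P (idx x)" using idx1 that fin by auto
        then show ?thesis unfolding f_def using g[of "idx x"] that
          unfolding bij_betw_def by auto
      qed
      have inj: "inj_on f F"
      proof (rule inj_onI)
        fix x y assume x: "x \<in> F" and y: "y \<in> F" and e: "f x = f y"
        have ix: "idx x \<in> J" "x \<in> P (idx x)" and iy: "idx y \<in> J" "y \<in> P (idx y)"
          using idx1 x y fin by auto
        have "idx x = idx y"
        proof (rule ccontr)
          assume "idx x \<noteq> idx y"
          then have "P (idx x) \<inter> P (idx y) = {}" using dis ix iy by blast
          then show False using fP[OF x] fP[OF y] e by auto
        qed
        then have xyP: "x \<in> F \<inter> P (idx x)" "y \<in> F \<inter> P (idx x)" using x y ix iy by auto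
        have eq: "g (idx x) x = g (idx x) y" using e \<open>idx x = idx y\<close> unfolding f_def by simp
        have "inj_on (g (idx x)) (F \<inter> P (idx x))" using g[OF ix(1)] unfolding bij_betw_def by blast
        from inj_onD[OF this eq xyP] show "x = y" .
      qed
      have surj: "f ` F = F'"
      proof
        show "f ` F \<subseteq> F'" using fP by auto
      next
        show "F' \<subseteq> f ` F"
        proof
          fix y assume y: "y \<in> F'"
          then have "y \<in> V" using fin by auto
          then obtain j where j: "j \<in> J" "y \<in> P j" using un by auto
          then obtain x where x: "x \<in> F \<inter> P j" "y = g j x"
            using g[OF j(1)] y unfolding bij_betw_def by auto
          have "idx x = j" using idx2 j x by auto
          then show "y \<in> f ` F" using x unfolding f_def by auto
        qed
      qed
      have pres: "E x y \<longleftrightarrow> E (f x) (f y)" if x: "x \<in> F" and y: "y \<in> F" for x y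
      proof -
        have ix: "idx x \<in> J" "x \<in> P (idx x)" and iy: "idx y \<in> J" "y \<in> P (idx y)"
          using idx1 x y fin by auto
        have fx: "f x \<in> P (idx x)" "f x \<in> V" and fy: "f y \<in> P (idx y)" "f y \<in> V"
          using fP x y fin by auto
        show ?thesis
        proof (cases "x = y")
          case True then show ?thesis using irr fx x fin by auto
        next
          case neq: False
          then have fne: "f x \<noteq> f y" using inj x y unfolding inj_on_def by auto
          show ?thesis
          proof (cases "idx x = idx y")
            case True
            have co: "clique_or_independent E (P (idx x))" using C ix by blast
            have m: "y \<in> P (idx x)" "f y \<in> P (idx x)" using True iy fy by auto
            from co show ?thesis unfolding clique_or_independent_def
            proof (elim disjE)
              assume a: "\<forall>a\<in>P (idx x). \<forall>b\<in>P (idx x). a \<noteq> b \<longrightarrow> E a b"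
              have "E x y" using a ix(2) m neq by blast
              moreover have "E (f x) (f y)" using a fx(1) m fne by blast
              ultimately show ?thesis by simp
            next
              assume a: "\<forall>a\<in>P (idx x). \<forall>b\<in>P (idx x). \<not> E a b"
              have "\<not> E x y" using a ix(2) m by blast
              moreover have "\<not> E (f x) (f y)" using a fx(1) m by blast
              ultimately show ?thesis by simp
            qed
          next
            case False
            then have "\<forall>a\<in>P (idx x). \<forall>b\<in>P (idx y). E a b \<longleftrightarrow> H (idx x) (idx y)"
              using L ix(1) iy(1) by blast
            then show ?thesis using ix(2) iy(2) fx(1) fy(1) by simp
          qed
        qed
      qed
      show ?thesis unfolding induced_iso_def bij_betw_def using inj surj pres by blast
    qed
    then show "monomorphic_decomposition V E J P"
      unfolding monomorphic_decomposition_def using part by blast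
  qed
qed

theorem mainTheorem20:
  fixes V :: "'a set" and E :: "'a \<Rightarrow> 'a \<Rightarrow> bool"
    and J :: "'j set" and P :: "'j \<Rightarrow> 'a set"
  assumes "ugraph V E"
  shows "(is_partition V J P \<longrightarrow>
            (monomorphic_decomposition V E J P \<longleftrightarrow>
              (\<forall>j\<in>J. clique_or_independent E (P j)) \<and> (\<exists>H. is_lex_sum V E J P H)))
       \<and> ((\<exists>(n::nat) Q. monomorphic_decomposition V E {..<n} Q) \<longleftrightarrow>
          (\<exists>(n::nat) Q H. is_partition V {..<n} Q \<and>
              (\<forall>j<n. clique_or_independent E (Q j)) \<and> is_lex_sum V E {..<n} Q H))"
proof (intro conjI impI)
  show "is_partition V J P \<Longrightarrow> monomorphic_decomposition V E J P \<longleftrightarrow>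
              (\<forall>j\<in>J. clique_or_independent E (P j)) \<and> (\<exists>H. is_lex_sum V E J P H)"
    using main_gen[OF assms] by blast
  show "(\<exists>(n::nat) Q. monomorphic_decomposition V E {..<n} Q) \<longleftrightarrow>
          (\<exists>(n::nat) Q H. is_partition V {..<n} Q \<and>
              (\<forall>j<n. clique_or_independent E (Q j)) \<and> is_lex_sum V E {..<n} Q H)"
  proof
    assume "\<exists>(n::nat) Q. monomorphic_decomposition V E {..<n} Q"
    then obtain n Q where m: "monomorphic_decomposition V E {..<(n::nat)} Q" by blast
    then have p: "is_partition V {..<n} Q" unfolding monomorphic_decomposition_def by blast
    show "\<exists>(n::nat) Q H. is_partition V {..<n} Q \<and>
              (\<forall>j<n. clique_or_independent E (Q j)) \<and> is_lex_sum V E {..<n} Q H"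
      using main_gen[OF assms p] m p by auto
  next
    assume "\<exists>(n::nat) Q H. is_partition V {..<n} Q \<and>
              (\<forall>j<n. clique_or_independent E (Q j)) \<and> is_lex_sum V E {..<n} Q H"
    then obtain n Q H where p: "is_partition V {..<(n::nat)} Q"
      and c: "\<forall>j<n. clique_or_independent E (Q j)" and l: "is_lex_sum V E {..<n} Q H" by blast
    show "\<exists>(n::nat) Q. monomorphic_decomposition V E {..<n} Q"
      using main_gen[OF assms p] c l by auto
  qed
qed

end
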